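(* Let $\mathcal{R}$ be the involutive system $u_{ij}=f_{ij}(x^1,x^2,x^3,u,u_i,u_j)$, $1\le i<j\le3$, let $\Theta=\mu\theta$ satisfy on $\mathcal{R}^\infty$ the system $X_lX_k(\Theta)+A^l_{lk}X_l(\Theta)+A^k_{lk}X_k(\Theta)+C_{lk}\Theta=0$ ($1\le l\ne k\le3$), and let $\xi_{ij}=X_j(\Theta)+A^i_{ij}\Theta$ be the $(i,j)$ Laplace transform of $\Theta$ for an ordered pair $i\ne j$. Let $\hat A^j_{ij}$ denote the coefficient of $X_j(\xi_{ij})$ in the $(i,j)$ equation $X_iX_j(\xi_{ij})+\hat A^i_{ij}X_i(\xi_{ij})+\hat A^j_{ij}X_j(\xi_{ij})+\hat C_{ij}\xi_{ij}=0$ of the system satisfied by $\xi_{ij}$, and let $\mathcal{X}_{ji}(\xi_{ij})=X_i(\xi_{ij})+\hat A^j_{ij}\xi_{ij}$ be the $(j,i)$ Laplace transform of $\xi_{ij}$ with respect to that system. If $H_{ij}\neq0$, then the $(i,j)$ Laplace transform has an inverse given by $\Theta=\frac{1}{H_{ij}}\,\mathcal{X}_{ji}(\xi_{ij}).$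
   Context: Setting: $U\subset\mathbb{R}^3$ open connected, $E=U\times(a,b)\to U$ trivial bundle, $J^\infty(E)$ with contact forms $\theta_I=du_I-\sum_ju_{Ij}dx^j$, $\theta=du-\sum_iu_idx^i$. $\mathcal{R}$: $F_{ij}:=u_{ij}-f_{ij}(x^1,x^2,x^3,u,u_i,u_j)=0$, $1\le i<j\le3$, $f_{ij}$ smooth with $D_kf_{ij}=D_if_{kj}$ for distinct $i,j,k$; $\mathcal{R}^\infty$ its infinite prolongation; $X_i=D_i$ the commuting total derivatives on $\mathcal{R}^\infty$, acting on contact forms by projected Lie derivative, $X_j(\theta_I)=\theta_{Ij}$. With $a^i_{ij}=\partial F_{ij}/\partial u_i$, $a^j_{ij}=\partial F_{ij}/\partial u_j$, $c_{ij}=\partial F_{ij}/\partial u$ and a nonvanishing function $\mu$, $\Theta=\mu\theta$ satisfies the system above with $A^i_{ij}=a^i_{ij}-X_j(\mu)/\mu$, $A^j_{ij}=a^j_{ij}-X_i(\mu)/\mu$, $C_{ij}=c_{ij}-X_iX_j(\mu)/\mu-a^i_{ij}X_i(\mu)/\mu-a^j_{ij}X_j(\mu)/\mu+2X_i(\mu)X_j(\mu)/\mu^2$, coefficients symmetric in lower indices. Laplace invariant: $H_{ij}=D_i(A^i_{ij})+A^i_{ij}A^j_{ij}-C_{ij}$. *)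

theory Defs
  imports Main
begin

text \<open>Abstract algebraic model of the setting on the infinite prolongation R-infinity.
  'f : ring of (smooth) functions on R-infinity; 'm : module of contact forms on R-infinity;
  sm : multiplication of forms by functions; D k : total derivative X_k on functions;
  X k : total derivative X_k acting on contact forms (projected Lie derivative);
  th : the contact form theta; a l i j : a^l_{ij} = dF_{ij}/du_l; c i j : c_{ij} = dF_{ij}/du.\<close>

definition module_ax :: "('f::comm_ring_1 \<Rightarrow> 'm::ab_group_add \<Rightarrow> 'm) \<Rightarrow> bool" where
  "module_ax sm \<longleftrightarrow>
     (\<forall>f g m. sm (f + g) m = sm f m + sm g m) \<and>
     (\<forall>f m n. sm f (m + n) = sm f m + sm f n) \<and>
     (\<forall>f g m. sm (f * g) m = sm f (sm g m)) \<and>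
     (\<forall>m. sm 1 m = m)"

definition function_derivations :: "(nat \<Rightarrow> 'f::comm_ring_1 \<Rightarrow> 'f) \<Rightarrow> bool" where
  "function_derivations D \<longleftrightarrow>
     (\<forall>k\<in>{1,2,3}. \<forall>f g. D k (f + g) = D k f + D k g \<and> D k (f * g) = D k f * g + f * D k g) \<and>
     (\<forall>k\<in>{1,2,3}. \<forall>l\<in>{1,2,3}. \<forall>f. D k (D l f) = D l (D k f))"

definition form_derivations ::
  "(nat \<Rightarrow> 'f::comm_ring_1 \<Rightarrow> 'f) \<Rightarrow> (nat \<Rightarrow> 'm::ab_group_add \<Rightarrow> 'm) \<Rightarrow> ('f \<Rightarrow> 'm \<Rightarrow> 'm) \<Rightarrow> bool" where
  "form_derivations D X sm \<longleftrightarrow>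
     (\<forall>k\<in>{1,2,3}. \<forall>m n. X k (m + n) = X k m + X k n) \<and>
     (\<forall>k\<in>{1,2,3}. \<forall>f m. X k (sm f m) = sm (D k f) m + sm f (X k m)) \<and>
     (\<forall>k\<in>{1,2,3}. \<forall>l\<in>{1,2,3}. \<forall>m. X k (X l m) = X l (X k m))"

text \<open>Pure multi-indices: (0,0) stands for the empty index (theta itself), (k,n) with n \<ge> 1
  for the index k...k (n times). On R-infinity the contact forms theta_I with I pure form a basis.\<close>

definition pure_idx :: "(nat \<times> nat) set" where
  "pure_idx = {(0, 0)} \<union> {(k, n). k \<in> {1,2,3} \<and> 1 \<le> n}"

definition theta_pure :: "(nat \<Rightarrow> 'm \<Rightarrow> 'm) \<Rightarrow> 'm \<Rightarrow> nat \<times> nat \<Rightarrow> 'm" where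
  "theta_pure X th I = (X (fst I) ^^ snd I) th"

definition pure_basis ::
  "(nat \<Rightarrow> 'm::ab_group_add \<Rightarrow> 'm) \<Rightarrow> ('f::comm_ring_1 \<Rightarrow> 'm \<Rightarrow> 'm) \<Rightarrow> 'm \<Rightarrow> bool" where
  "pure_basis X sm th \<longleftrightarrow>
     (\<forall>S g. finite S \<and> S \<subseteq> pure_idx \<and> (\<Sum>I\<in>S. sm (g I) (theta_pure X th I)) = 0
              \<longrightarrow> (\<forall>I\<in>S. g I = 0)) \<and>
     (\<forall>m. \<exists>S g. finite S \<and> S \<subseteq> pure_idx \<and> m = (\<Sum>I\<in>S. sm (g I) (theta_pure X th I)))"

definition Rinf_setting ::
  "(nat \<Rightarrow> 'f::comm_ring_1 \<Rightarrow> 'f) \<Rightarrow> (nat \<Rightarrow> 'm::ab_group_add \<Rightarrow> 'm) \<Rightarrow> ('f \<Rightarrow> 'm \<Rightarrow> 'm)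
    \<Rightarrow> 'm \<Rightarrow> (nat \<Rightarrow> nat \<Rightarrow> nat \<Rightarrow> 'f) \<Rightarrow> (nat \<Rightarrow> nat \<Rightarrow> 'f) \<Rightarrow> bool" where
  "Rinf_setting D X sm th a c \<longleftrightarrow>
     module_ax sm \<and> function_derivations D \<and> form_derivations D X sm \<and> pure_basis X sm th \<and>
     (\<forall>l i j. a l i j = a l j i) \<and> (\<forall>i j. c i j = c j i) \<and>
     (\<forall>i\<in>{1,2,3}. \<forall>j\<in>{1,2,3}. i \<noteq> j \<longrightarrow>
        X i (X j th) + sm (a i i j) (X i th) + sm (a j i j) (X j th) + sm (c i j) th = 0)"

text \<open>Coefficients of the system for Theta = mu theta; mui is the inverse of mu.
  Acoef l i j = A^l_{ij} for l \<in> {i,j}.\<close>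

definition Acoef :: "(nat \<Rightarrow> 'f::comm_ring_1 \<Rightarrow> 'f) \<Rightarrow> (nat \<Rightarrow> nat \<Rightarrow> nat \<Rightarrow> 'f) \<Rightarrow> 'f \<Rightarrow> 'f
    \<Rightarrow> nat \<Rightarrow> nat \<Rightarrow> nat \<Rightarrow> 'f" where
  "Acoef D a mu mui l i j = a l i j - D (if l = i then j else i) mu * mui"

definition Ccoef :: "(nat \<Rightarrow> 'f::comm_ring_1 \<Rightarrow> 'f) \<Rightarrow> (nat \<Rightarrow> nat \<Rightarrow> nat \<Rightarrow> 'f) \<Rightarrow> (nat \<Rightarrow> nat \<Rightarrow> 'f)
    \<Rightarrow> 'f \<Rightarrow> 'f \<Rightarrow> nat \<Rightarrow> nat \<Rightarrow> 'f" where
  "Ccoef D a c mu mui i j = c i j - D i (D j mu) * mui - a i i j * D i mu * mui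
      - a j i j * D j mu * mui + 2 * D i mu * D j mu * (mui * mui)"

definition laplace_H :: "(nat \<Rightarrow> 'f::comm_ring_1 \<Rightarrow> 'f) \<Rightarrow> (nat \<Rightarrow> nat \<Rightarrow> nat \<Rightarrow> 'f) \<Rightarrow> (nat \<Rightarrow> nat \<Rightarrow> 'f)
    \<Rightarrow> 'f \<Rightarrow> 'f \<Rightarrow> nat \<Rightarrow> nat \<Rightarrow> 'f" where
  "laplace_H D a c mu mui i j =
     D i (Acoef D a mu mui i i j) + Acoef D a mu mui i i j * Acoef D a mu mui j i j
       - Ccoef D a c mu mui i j"

definition laplace_xi :: "(nat \<Rightarrow> 'f::comm_ring_1 \<Rightarrow> 'f) \<Rightarrow> (nat \<Rightarrow> 'm::ab_group_add \<Rightarrow> 'm) \<Rightarrow> ('f \<Rightarrow> 'm \<Rightarrow> 'm)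
    \<Rightarrow> (nat \<Rightarrow> nat \<Rightarrow> nat \<Rightarrow> 'f) \<Rightarrow> 'f \<Rightarrow> 'f \<Rightarrow> nat \<Rightarrow> nat \<Rightarrow> 'm \<Rightarrow> 'm" where
  "laplace_xi D X sm a mu mui i j Th = X j Th + sm (Acoef D a mu mui i i j) Th"

end

theory Submission
  imports Defs
begin

lemma mod_lemmas:
  fixes sm :: "'f::comm_ring_1 \<Rightarrow> 'm::ab_group_add \<Rightarrow> 'm"
  assumes "module_ax sm"
  shows "sm (f + g) m = sm f m + sm g m" "sm f (m + n) = sm f m + sm f n"
    "sm (f * g) m = sm f (sm g m)" "sm 1 m = m" "sm 0 m = 0" "sm f 0 = 0"
    "sm (- f) m = - sm f m" "sm f (- m) = - sm f m"
    "sm (f - g) m = sm f m - sm g m" "sm f (m - n) = sm f m - sm f n"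
proof -
  have a: "\<And>f g m. sm (f + g) m = sm f m + sm g m" and b: "\<And>f m n. sm f (m + n) = sm f m + sm f n"
    using assms unfolding module_ax_def by auto
  show "sm (f + g) m = sm f m + sm g m" "sm f (m + n) = sm f m + sm f n"
    "sm (f * g) m = sm f (sm g m)" "sm 1 m = m" using assms unfolding module_ax_def by auto
  have z1: "\<And>m. sm 0 m = 0" using a[of 0 0] by simp
  have z2: "\<And>f. sm f 0 = 0" using b[of _ 0 0] by simp
  show "sm 0 m = 0" "sm f 0 = 0" using z1 z2 by auto
  have n1: "\<And>f m. sm (- f) m = - sm f m" using a z1 by (metis add.right_inverse add_eq_0_iff)
  have n2: "\<And>f m. sm f (- m) = - sm f m" using b z2 by (metis add.right_inverse add_eq_0_iff)
  show "sm (- f) m = - sm f m" "sm f (- m) = - sm f m" using n1 n2 by auto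
  show "sm (f - g) m = sm f m - sm g m" using a[of f "-g"] n1 by simp
  show "sm f (m - n) = sm f m - sm f n" using b[of f m "-n"] n2 by simp
qed

lemma der_lemmas:
  fixes X :: "nat \<Rightarrow> 'm::ab_group_add \<Rightarrow> 'm"
  assumes "\<And>m n. X k (m + n) = X k m + X k n"
  shows "X k 0 = 0" "X k (- m) = - X k m" "X k (m - n) = X k m - X k n"
proof -
  have z: "X k 0 = 0" using assms[of 0 0] by simp
  show "X k 0 = 0" by (rule z)
  have n: "\<And>m. X k (- m) = - X k m" using assms z by (metis add.right_inverse add_eq_0_iff)
  show "X k (- m) = - X k m" by (rule n)
  show "X k (m - n) = X k m - X k n" using assms[of m "-n"] n by simp
qed

theorem proposition3p7:
  fixes D :: "nat \<Rightarrow> 'f::comm_ring_1 \<Rightarrow> 'f"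
    and X :: "nat \<Rightarrow> 'm::ab_group_add \<Rightarrow> 'm"
    and sm :: "'f \<Rightarrow> 'm \<Rightarrow> 'm"
    and th :: 'm and a :: "nat \<Rightarrow> nat \<Rightarrow> nat \<Rightarrow> 'f" and c :: "nat \<Rightarrow> nat \<Rightarrow> 'f"
    and mu mui hinv Ahat_i Ahat_j Chat :: 'f
    and i j :: nat
  assumes setting: "Rinf_setting D X sm th a c"
    and ij: "i \<in> {1,2,3}" "j \<in> {1,2,3}" "i \<noteq> j"
    and mu_unit: "mu * mui = 1"
    and Theta_sys: "\<forall>l\<in>{1,2,3}. \<forall>k\<in>{1,2,3}. l \<noteq> k \<longrightarrow>
        X l (X k (sm mu th)) + sm (Acoef D a mu mui l l k) (X l (sm mu th))
          + sm (Acoef D a mu mui k l k) (X k (sm mu th)) + sm (Ccoef D a c mu mui l k) (sm mu th) = 0"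
    and xi_eq: "X i (X j (laplace_xi D X sm a mu mui i j (sm mu th)))
        + sm Ahat_i (X i (laplace_xi D X sm a mu mui i j (sm mu th)))
        + sm Ahat_j (X j (laplace_xi D X sm a mu mui i j (sm mu th)))
        + sm Chat (laplace_xi D X sm a mu mui i j (sm mu th)) = 0"
    and H_unit: "laplace_H D a c mu mui i j * hinv = 1"
  shows "sm mu th = sm hinv (X i (laplace_xi D X sm a mu mui i j (sm mu th))
                      + sm Ahat_j (laplace_xi D X sm a mu mui i j (sm mu th)))"
proof -
  define T where "T = sm mu th"
  define A where "A = Acoef D a mu mui i i j"
  define B where "B = Acoef D a mu mui j i j"
  define C where "C = Ccoef D a c mu mui i j"
  define H where "H = laplace_H D a c mu mui i j"
  define xi where "xi = laplace_xi D X sm a mu mui i j T"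
  have Hd: "H = D i A + A * B - C" unfolding H_def A_def B_def C_def laplace_H_def by simp
  have xid: "xi = X j T + sm A T" unfolding xi_def laplace_xi_def A_def by simp
  have M: "module_ax sm" and FD: "function_derivations D" and XD: "form_derivations D X sm"
    and PB: "pure_basis X sm th" using setting unfolding Rinf_setting_def by auto
  note ml = mod_lemmas[OF M]
  have Xadd: "\<And>k m n. k \<in> {1,2,3} \<Longrightarrow> X k (m + n) = X k m + X k n"
    and Xsm: "\<And>k f m. k \<in> {1,2,3} \<Longrightarrow> X k (sm f m) = sm (D k f) m + sm f (X k m)"
    and Xcomm: "\<And>k l m. k \<in> {1,2,3} \<Longrightarrow> l \<in> {1,2,3} \<Longrightarrow> X k (X l m) = X l (X k m)"
    using XD unfolding form_derivations_def by auto
  have Dmul: "\<And>k f g. k \<in> {1,2,3} \<Longrightarrow> D k (f * g) = D k f * g + f * D k g"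
    and Dadd: "\<And>k f g. k \<in> {1,2,3} \<Longrightarrow> D k (f + g) = D k f + D k g"
    using FD unfolding function_derivations_def by auto
  note xli = der_lemmas[of X i, OF Xadd[OF ij(1)]]
  note xlj = der_lemmas[of X j, OF Xadd[OF ij(2)]]
  have sys: "X i (X j T) + sm A (X i T) + sm B (X j T) + sm C T = 0"
    using Theta_sys ij unfolding T_def A_def B_def C_def by auto
  have Xixi: "X i xi = sm H T - sm B xi"
  proof -
    have "X i xi = X i (X j T) + sm (D i A) T + sm A (X i T)"
      unfolding xid using Xadd[OF ij(1)] Xsm[OF ij(1)] by (simp add: add.assoc)
    also have "X i (X j T) = - (sm A (X i T) + sm B (X j T) + sm C T)"
      using sys by (metis add.assoc eq_neg_iff_add_eq_0)
    finally have "X i xi = - (sm A (X i T) + sm B (X j T) + sm C T) + sm (D i A) T + sm A (X i T)" .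
    hence P1: "X i xi = sm (D i A) T - sm C T - sm B (X j T)" by (simp add: algebra_simps)
    have "sm H T - sm B xi = sm (D i A) T + sm (A*B) T - sm C T - sm B (X j T) - sm (B*A) T"
      unfolding Hd xid by (simp add: ml)
    hence P2: "sm H T - sm B xi = sm (D i A) T - sm C T - sm B (X j T)" by (simp add: mult.commute algebra_simps)
    show ?thesis using P1 P2 by simp
  qed
  have XjXixi: "X j (X i xi) = sm (D j H) T + sm H (X j T) - (sm (D j B) xi + sm B (X j xi))"
    unfolding Xixi using Xsm[OF ij(2)] xlj by simp
  define e where "e = Ahat_j - B"
  define R where "R = sm (D j H) T + sm H (X j T) - sm (D j B) xi + sm Ahat_i (sm H T - sm B xi) + sm Chat xi"
  have eq1: "sm e (X j xi) + R = 0"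
  proof -
    have "X i (X j xi) = X j (X i xi)" using Xcomm ij by auto
    hence "X j (X i xi) + sm Ahat_i (X i xi) + sm Ahat_j (X j xi) + sm Chat xi = 0"
      using xi_eq unfolding xi_def T_def by simp
    hence "sm (D j H) T + sm H (X j T) - (sm (D j B) xi + sm B (X j xi)) + sm Ahat_i (X i xi) + sm Ahat_j (X j xi) + sm Chat xi = 0"
      unfolding XjXixi .
    hence "sm (D j H) T + sm H (X j T) - (sm (D j B) xi + sm B (X j xi)) + sm Ahat_i (sm H T - sm B xi) + sm Ahat_j (X j xi) + sm Chat xi = 0"
      unfolding Xixi .
    thus ?thesis unfolding e_def R_def by (simp add: ml algebra_simps)
  qed
  define sp where "sp = (\<lambda>m. \<exists>g0 g1. m = sm g0 th + sm g1 (X j th))"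
  have sp_add: "\<And>m n. sp m \<Longrightarrow> sp n \<Longrightarrow> sp (m + n)"
  proof -
    fix m n assume "sp m" "sp n"
    then obtain g0 g1 h0 h1 where "m = sm g0 th + sm g1 (X j th)" "n = sm h0 th + sm h1 (X j th)"
      unfolding sp_def by blast
    hence "m + n = sm (g0+h0) th + sm (g1+h1) (X j th)" by (simp add: ml algebra_simps)
    thus "sp (m + n)" unfolding sp_def by blast
  qed
  have sp_sm: "\<And>f m. sp m \<Longrightarrow> sp (sm f m)"
  proof -
    fix f m assume "sp m"
    then obtain g0 g1 where "m = sm g0 th + sm g1 (X j th)" unfolding sp_def by blast
    hence "sm f m = sm (f*g0) th + sm (f*g1) (X j th)" by (simp add: ml)
    thus "sp (sm f m)" unfolding sp_def by blast
  qed
  have sp_neg: "\<And>m. sp m \<Longrightarrow> sp (- m)"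
  proof -
    fix m assume "sp m"
    hence "sp (sm (-1) m)" by (rule sp_sm)
    thus "sp (- m)" by (simp add: ml)
  qed
  have sp_diff: "\<And>m n. sp m \<Longrightarrow> sp n \<Longrightarrow> sp (m - n)"
    using sp_add sp_neg by (metis diff_conv_add_uminus)
  have spT: "sp T" unfolding sp_def T_def by (rule exI[of _ mu], rule exI[of _ 0], simp add: ml)
  have XjT: "X j T = sm (D j mu) th + sm mu (X j th)" unfolding T_def using Xsm[OF ij(2)] by simp
  have spXjT: "sp (X j T)" unfolding sp_def XjT by blast
  have spxi: "sp xi" unfolding xid using sp_add spXjT sp_sm spT by blast
  have spR: "sp R" unfolding R_def using sp_add sp_diff sp_sm spT spXjT spxi by metis
  have XjXjT: "X j (X j T) = sm (D j (D j mu)) th + sm (D j mu) (X j th) + (sm (D j mu) (X j th) + sm mu (X j (X j th)))"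
    unfolding XjT using Xadd[OF ij(2)] Xsm[OF ij(2)] by simp
  have spw: "sp (sm (D j (D j mu)) th + sm (D j mu) (X j th) + sm (D j mu) (X j th))"
    unfolding sp_def by (rule exI[of _ "D j (D j mu)"], rule exI[of _ "D j mu + D j mu"], simp only: ml(1) add.assoc)
  obtain w where sw: "sp w" and Xjxi: "X j xi = w + sm mu (X j (X j th))"
  proof -
    have "X j xi = X j (X j T) + sm (D j A) T + sm A (X j T)"
      unfolding xid using Xadd[OF ij(2)] Xsm[OF ij(2)] by (simp add: add.assoc)
    also have "\<dots> = (sm (D j (D j mu)) th + sm (D j mu) (X j th) + sm (D j mu) (X j th)
        + sm (D j A) T + sm A (X j T)) + sm mu (X j (X j th))"
      unfolding XjXjT by (simp add: algebra_simps)
    finally show ?thesis using that sp_add spw sp_sm spT spXjT by metis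
  qed
  have "sp (sm e w + R)" using sp_add sp_sm sw spR by blast
  then obtain g0 g1 where gg: "sm e w + R = sm g0 th + sm g1 (X j th)" unfolding sp_def by blast
  have eq2: "sm g0 th + sm g1 (X j th) + sm (e * mu) (X j (X j th)) = 0"
    using eq1 unfolding Xjxi gg[symmetric] by (simp add: ml algebra_simps)
  have j1: "j \<ge> 1" using ij by auto
  define S where "S = {(0::nat,0::nat), (j,1), (j,2)}"
  define g where "g = (\<lambda>I::nat\<times>nat. if I = (0,0) then g0 else if I = (j,1) then g1 else e * mu)"
  have fin: "finite S" unfolding S_def by simp
  have sub: "S \<subseteq> pure_idx" unfolding S_def pure_idx_def using ij by auto
  have tp: "theta_pure X th (0,0) = th" "theta_pure X th (j,1) = X j th"
    "theta_pure X th (j,2) = X j (X j th)" unfolding theta_pure_def by (simp_all add: numeral_2_eq_2)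
  have "(\<Sum>I\<in>S. sm (g I) (theta_pure X th I)) = sm g0 th + sm g1 (X j th) + sm (e * mu) (X j (X j th))"
    unfolding S_def g_def using j1 tp by (simp add: algebra_simps)
  hence "(\<Sum>I\<in>S. sm (g I) (theta_pure X th I)) = 0" using eq2 by simp
  hence "g (j,2) = 0" using PB fin sub unfolding pure_basis_def S_def by blast
  hence "e * mu = 0" unfolding g_def using j1 by simp
  hence "e = 0" using mu_unit by (metis mult.assoc mult_1_right mult_zero_left)
  hence Ahj: "Ahat_j = B" unfolding e_def by simp
  have "X i xi + sm Ahat_j xi = sm H T" using Xixi Ahj by simp
  hence "sm hinv (X i xi + sm Ahat_j xi) = sm (hinv * H) T" by (simp add: ml)
  also have "\<dots> = T" using H_unit unfolding H_def by (simp add: mult.commute ml)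
  finally show ?thesis unfolding xi_def T_def by simp
qed

end
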